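(* Let $\mathcal{T}=(\mathcal{V},\mathcal{E})$ be a grid of depth $d$ obeying the LC-PF model and covariance assumption of the context, with zero-mean Gaussian injection deviations. Let $r_{\max},x_{\max}$ be the maximum line resistance and reactance, and set $k_2=\max(r_{\max}^2,x_{\max}^2)\max_{c}\big(\Omega_p(c,c)+\Omega_q(c,c)+2\Omega_{pq}(c,c)\big)$, the inner maximum being over non-root nodes $c$. Then every diagonal entry of the voltage magnitude covariance matrix satisfies $\Omega_v(a,a)\le d^2|\mathcal{V}|k_2$.
   Context: $\mathcal{T}=(\mathcal{V},\mathcal{E})$ is a tree with a distinguished root (substation) of degree one. Its depth $d$ is the maximum number of edges on a path from the root. Each edge $(ab)$ has resistance $r_{ab}>0$ and reactance $x_{ab}>0$. Let $H_{1/r},H_{1/x}$ be the weighted Laplacians with edge weights $1/r_{ab}$, $1/x_{ab}$, with the root row and column removed. Non-root nodes have random injections $p_a,q_a$. The LC-PF model gives the voltage magnitude deviations $v=H_{1/r}^{-1}p+H_{1/x}^{-1}q$ at non-root nodes, and $\Omega_v$ is the covariance matrix of $v$. Covariance assumption: $\Omega_p,\Omega_q$ are the covariances of $p,q$, and $\Omega_{pq}=\mathbb{E}[(p-\mathbb{E}p)(q-\mathbb{E}q)^T]=\Omega_{qp}^T$. For distinct non-root $a,b$, $\Omega_p(a,b)=\Omega_q(a,b)=\Omega_{qp}(a,b)=0$, and $\Omega_{qp}(a,a)\ge0$. *)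

theory Defs
  imports "HOL-Probability.Probability"
begin

text \<open>Vertex type: 'n option, root = None, non-root nodes = Some n.
  The tree is given by a parent map par :: 'n => 'n option; the edges are
  the pairs (Some n, par n), each edge identified by its child n.\<close>

definition step_up :: "('n \<Rightarrow> 'n option) \<Rightarrow> 'n option \<Rightarrow> 'n option" where
  "step_up par u = (case u of None \<Rightarrow> None | Some n \<Rightarrow> par n)"

definition is_rooted_tree :: "('n \<Rightarrow> 'n option) \<Rightarrow> bool" where
  "is_rooted_tree par \<longleftrightarrow> (\<forall>n. \<exists>k. (step_up par ^^ k) (Some n) = None)"

definition root_degree_one :: "('n \<Rightarrow> 'n option) \<Rightarrow> bool" where
  "root_degree_one par \<longleftrightarrow> card {n. par n = None} = 1"

definition node_depth :: "('n \<Rightarrow> 'n option) \<Rightarrow> 'n \<Rightarrow> nat" where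
  "node_depth par n = (LEAST k. (step_up par ^^ k) (Some n) = None)"

definition tree_depth :: "('n::finite \<Rightarrow> 'n option) \<Rightarrow> nat" where
  "tree_depth par = Max (range (node_depth par))"

definition ind :: "'v \<Rightarrow> 'v \<Rightarrow> real" where
  "ind u w = (if u = w then 1 else 0)"

definition laplacian :: "('n::finite \<Rightarrow> 'n option) \<Rightarrow> ('n \<Rightarrow> real) \<Rightarrow> 'n option \<Rightarrow> 'n option \<Rightarrow> real" where
  "laplacian par w u u' =
     (\<Sum>n\<in>UNIV. w n * (ind u (Some n) - ind u (par n)) * (ind u' (Some n) - ind u' (par n)))"

definition red_laplacian :: "('n::finite \<Rightarrow> 'n option) \<Rightarrow> ('n \<Rightarrow> real) \<Rightarrow> real^'n^'n" where
  "red_laplacian par w = (\<chi> i j. laplacian par w (Some i) (Some j))"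

definition cov :: "'w measure \<Rightarrow> ('w \<Rightarrow> real) \<Rightarrow> ('w \<Rightarrow> real) \<Rightarrow> real" where
  "cov M X Y = (\<integral>\<omega>. (X \<omega> - (\<integral>\<omega>'. X \<omega>' \<partial>M)) * (Y \<omega> - (\<integral>\<omega>'. Y \<omega>' \<partial>M)) \<partial>M)"

definition centered_gaussian :: "'w measure \<Rightarrow> ('w \<Rightarrow> real) \<Rightarrow> bool" where
  "centered_gaussian M X \<longleftrightarrow>
     X \<in> borel_measurable M \<and>
     ((AE \<omega> in M. X \<omega> = 0) \<or> (\<exists>\<sigma>>0. distributed M lborel X (normal_density 0 \<sigma>)))"

definition jointly_centered_gaussian ::
    "'w measure \<Rightarrow> ('n::finite \<Rightarrow> 'w \<Rightarrow> real) \<Rightarrow> ('n \<Rightarrow> 'w \<Rightarrow> real) \<Rightarrow> bool" where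
  "jointly_centered_gaussian M p q \<longleftrightarrow>
     (\<forall>\<alpha> \<beta>. centered_gaussian M (\<lambda>\<omega>. \<Sum>c\<in>UNIV. \<alpha> c * p c \<omega> + \<beta> c * q c \<omega>))"

definition lcpf_v :: "('n::finite \<Rightarrow> 'n option) \<Rightarrow> ('n \<Rightarrow> real) \<Rightarrow> ('n \<Rightarrow> real)
     \<Rightarrow> ('n \<Rightarrow> 'w \<Rightarrow> real) \<Rightarrow> ('n \<Rightarrow> 'w \<Rightarrow> real) \<Rightarrow> 'n \<Rightarrow> 'w \<Rightarrow> real" where
  "lcpf_v par r x p q a \<omega> =
     (matrix_inv (red_laplacian par (\<lambda>n. 1 / r n)) *v (\<chi> c. p c \<omega>)) $ a
   + (matrix_inv (red_laplacian par (\<lambda>n. 1 / x n)) *v (\<chi> c. q c \<omega>)) $ a"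

end

theory Submission
  imports Defs
begin


definition tpath :: "('n \<Rightarrow> 'n option) \<Rightarrow> 'n \<Rightarrow> 'n set" where
  "tpath par i = {n. \<exists>k. (step_up par ^^ k) (Some i) = Some n}"

lemma funpow_None: "(step_up par ^^ k) None = None"
  by (induction k) (auto simp: step_up_def)

lemma funpow_Suc_Some: "(step_up par ^^ Suc k) (Some n) = (step_up par ^^ k) (par n)"
  by (simp add: funpow_Suc_right step_up_def del: funpow.simps)

lemma reach: "is_rooted_tree par \<Longrightarrow> (step_up par ^^ node_depth par n) (Some n) = None"
  unfolding node_depth_def is_rooted_tree_def by (rule LeastI_ex) blast

lemma beyond: assumes "is_rooted_tree par" "node_depth par n \<le> k"
  shows "(step_up par ^^ k) (Some n) = None"
proof -
  obtain j where "k = j + node_depth par n" using assms(2) le_Suc_ex by (metis add.commute)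
  then show ?thesis using reach[OF assms(1)] by (simp add: funpow_add funpow_None)
qed

lemma tpath_rec: "tpath par n = insert n (case par n of None \<Rightarrow> {} | Some j \<Rightarrow> tpath par j)"
proof (rule set_eqI)
  fix m
  show "m \<in> tpath par n \<longleftrightarrow> m \<in> insert n (case par n of None \<Rightarrow> {} | Some j \<Rightarrow> tpath par j)"
  proof
    assume "m \<in> tpath par n"
    then obtain k where k: "(step_up par ^^ k) (Some n) = Some m" by (auto simp: tpath_def)
    show "m \<in> insert n (case par n of None \<Rightarrow> {} | Some j \<Rightarrow> tpath par j)"
    proof (cases k)
      case 0 then show ?thesis using k by simp
    next
      case (Suc k')
      then have "(step_up par ^^ k') (par n) = Some m" using k funpow_Suc_Some by metis
      then show ?thesis by (cases "par n") (auto simp: funpow_None tpath_def)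
    qed
  next
    assume "m \<in> insert n (case par n of None \<Rightarrow> {} | Some j \<Rightarrow> tpath par j)"
    then show "m \<in> tpath par n"
    proof
      assume "m = n" then show ?thesis unfolding tpath_def by (auto intro: exI[of _ 0])
    next
      assume h: "m \<in> (case par n of None \<Rightarrow> {} | Some j \<Rightarrow> tpath par j)"
      then obtain j where j: "par n = Some j" "m \<in> tpath par j" by (cases "par n") auto
      then obtain k where "(step_up par ^^ k) (Some j) = Some m" by (auto simp: tpath_def)
      then have "(step_up par ^^ Suc k) (Some n) = Some m" using j funpow_Suc_Some by metis
      then show ?thesis unfolding tpath_def by blast
    qed
  qed
qed

lemma periodic: assumes "(step_up par ^^ Suc k) (Some n) = Some n"
  shows "(step_up par ^^ (Suc k * m)) (Some n) = Some n"
proof (induction m)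
  case 0 then show ?case by simp
next
  case (Suc m)
  have "Suc k * Suc m = Suc k + Suc k * m" by simp
  then show ?case using Suc assms by (simp only: funpow_add o_apply)
qed

lemma notin: assumes "is_rooted_tree par" "par n = Some j" shows "n \<notin> tpath par j"
proof
  assume "n \<in> tpath par j"
  then obtain k where "(step_up par ^^ k) (Some j) = Some n" by (auto simp: tpath_def)
  then have "(step_up par ^^ Suc k) (Some n) = Some n" using assms(2) funpow_Suc_Some by metis
  then have "(step_up par ^^ (Suc k * node_depth par n)) (Some n) = Some n" by (rule periodic)
  moreover have "(step_up par ^^ (Suc k * node_depth par n)) (Some n) = None"
    by (rule beyond[OF assms(1)]) simp
  ultimately show False by simp
qed

lemma card_tpath: assumes "is_rooted_tree par" shows "card (tpath par n) \<le> node_depth par n"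
proof -
  have "tpath par n \<subseteq> (\<lambda>k. the ((step_up par ^^ k) (Some n))) ` {..<node_depth par n}"
  proof
    fix m assume "m \<in> tpath par n"
    then obtain k where k: "(step_up par ^^ k) (Some n) = Some m" by (auto simp: tpath_def)
    have "k < node_depth par n"
    proof (rule ccontr)
      assume "\<not> ?thesis" then show False using beyond[OF assms, of n k] k by simp
    qed
    then show "m \<in> (\<lambda>k. the ((step_up par ^^ k) (Some n))) ` {..<node_depth par n}"
      using k by (auto intro!: image_eqI[of _ _ k])
  qed
  then have "card (tpath par n) \<le> card ((\<lambda>k. the ((step_up par ^^ k) (Some n))) ` {..<node_depth par n})"
    by (rule card_mono[rotated]) simp
  also have "\<dots> \<le> node_depth par n" using card_image_le by fastforce
  finally show ?thesis .
qed



definition Amat :: "('n::finite \<Rightarrow> 'n option) \<Rightarrow> real^'n^'n" where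
  "Amat par = (\<chi> n i. ind (Some i) (Some n) - ind (Some i) (par n))"
definition Bmat :: "('n::finite \<Rightarrow> 'n option) \<Rightarrow> real^'n^'n" where
  "Bmat par = (\<chi> i n. if n \<in> tpath par i then 1 else 0)"
definition Gmat :: "('n::finite \<Rightarrow> 'n option) \<Rightarrow> ('n \<Rightarrow> real) \<Rightarrow> real^'n^'n" where
  "Gmat par w = (\<chi> a c. \<Sum>n\<in>UNIV. Bmat par $ a $ n * Bmat par $ c $ n / w n)"

lemma delta1: "(\<Sum>i\<in>(UNIV::'n::finite set). (if i = a then 1 else 0) * (f i::real)) = f a"
proof -
  have "(\<lambda>i. (if i = a then 1 else 0) * f i) = (\<lambda>i. if i = a then f a else 0)" by auto
  then show ?thesis by (simp only:) simp
qed

lemma delta2: "(\<Sum>k\<in>(UNIV::'n::finite set). c * (if i = k then 1 else 0) * (g k::real) / h k) = c * g i / h i"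
proof -
  have "(\<lambda>k. c * (if i = k then 1 else 0) * g k / h k) = (\<lambda>k. if k = i then c * g i / h i else 0)" by auto
  then show ?thesis by (simp only:) simp
qed

lemma AB_entry: "(Amat par ** Bmat par) $ n $ m =
   Bmat par $ n $ m - (case par n of None \<Rightarrow> 0 | Some j \<Rightarrow> Bmat par $ j $ m)"
proof -
  have "(Amat par ** Bmat par) $ n $ m = (\<Sum>i\<in>UNIV. (ind (Some i) (Some n) - ind (Some i) (par n)) * Bmat par $ i $ m)"
    by (simp add: matrix_matrix_mult_def Amat_def)
  also have "\<dots> = (\<Sum>i\<in>UNIV. ind (Some i) (Some n) * Bmat par $ i $ m) - (\<Sum>i\<in>UNIV. ind (Some i) (par n) * Bmat par $ i $ m)"
    by (simp add: left_diff_distrib sum_subtractf)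
  also have "(\<Sum>i\<in>UNIV. ind (Some i) (Some n) * Bmat par $ i $ m) = Bmat par $ n $ m"
  proof -
    have "(\<lambda>i. ind (Some i) (Some n) * Bmat par $ i $ m) = (\<lambda>i. if i = n then Bmat par $ n $ m else 0)"
      by (auto simp: ind_def)
    then show ?thesis by (simp only:) simp
  qed
  also have "(\<Sum>i\<in>UNIV. ind (Some i) (par n) * Bmat par $ i $ m) = (case par n of None \<Rightarrow> 0 | Some j \<Rightarrow> Bmat par $ j $ m)"
    by (cases "par n") (simp_all add: ind_def delta1)
  finally show ?thesis .
qed

lemma AB: assumes "is_rooted_tree par" shows "Amat par ** Bmat par = mat 1"
proof -
  have "(Amat par ** Bmat par) $ n $ m = mat 1 $ n $ m" for n m
  proof (cases "par n")
    case None
    then show ?thesis using tpath_rec[of par n] by (simp only: AB_entry) (simp add: Bmat_def mat_def)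
  next
    case (Some j)
    then show ?thesis using tpath_rec[of par n] notin[OF assms Some]
      by (simp only: AB_entry) (auto simp add: Bmat_def mat_def)
  qed
  then show ?thesis by (simp add: vec_eq_iff)
qed

lemma BA: assumes "is_rooted_tree par" shows "Bmat par ** Amat par = mat 1"
  using AB[OF assms] matrix_left_right_inverse by blast

lemma L_fact: "red_laplacian par w = transpose (Amat par) ** (\<chi> n j. w n * Amat par $ n $ j)"
  by (simp add: vec_eq_iff red_laplacian_def laplacian_def matrix_matrix_mult_def transpose_def Amat_def mult_ac)

lemma LG: assumes "is_rooted_tree par" "\<And>n. w n \<noteq> 0"
  shows "red_laplacian par w ** Gmat par w = mat 1"
proof -
  define C where "C = (\<chi> n c. Bmat par $ c $ n / w n)"
  have G: "Gmat par w = Bmat par ** C"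
    by (simp add: vec_eq_iff Gmat_def C_def matrix_matrix_mult_def)
  have AwB: "(\<chi> n j. w n * Amat par $ n $ j) ** Bmat par = (\<chi> n m. w n * mat 1 $ n $ m)"
  proof -
    have "(\<Sum>k\<in>UNIV. w i * Amat par $ i $ k * Bmat par $ k $ ia) = w i * mat 1 $ i $ ia" for i ia
    proof -
      have "(\<Sum>k\<in>UNIV. w i * Amat par $ i $ k * Bmat par $ k $ ia) = w i * (Amat par ** Bmat par) $ i $ ia"
        by (simp add: matrix_matrix_mult_def sum_distrib_left mult.assoc)
      then show ?thesis using AB[OF assms(1)] by simp
    qed
    then show ?thesis by (simp add: vec_eq_iff matrix_matrix_mult_def)
  qed
  have "((\<chi> n j. w n * Amat par $ n $ j) ** Bmat par) ** C = transpose (Bmat par)"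
    unfolding AwB using assms(2)
    by (simp add: vec_eq_iff matrix_matrix_mult_def C_def transpose_def mat_def delta2)
  note X = this
  have "red_laplacian par w ** Gmat par w = transpose (Amat par) ** (((\<chi> n j. w n * Amat par $ n $ j) ** Bmat par) ** C)"
    by (simp add: L_fact G matrix_mul_assoc)
  also have "\<dots> = transpose (Amat par) ** transpose (Bmat par)" by (simp only: X)
  also have "\<dots> = transpose (Bmat par ** Amat par)" by (simp add: matrix_transpose_mul)
  also have "\<dots> = mat 1" using BA[OF assms(1)] by (simp add: transpose_mat)
  finally show ?thesis .
qed

lemma inv_G: assumes "is_rooted_tree par" "\<And>n. w n \<noteq> 0"
  shows "matrix_inv (red_laplacian par w) = Gmat par w"
proof -
  let ?L = "red_laplacian par w" and ?G = "Gmat par w"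
  have 1: "?L ** ?G = mat 1" by (rule LG[OF assms])
  then have 2: "?G ** ?L = mat 1" using matrix_left_right_inverse by blast
  have "?L ** matrix_inv ?L = mat 1 \<and> matrix_inv ?L ** ?L = mat 1"
    unfolding matrix_inv_def by (rule someI[of _ ?G]) (use 1 2 in blast)
  then have "matrix_inv ?L = matrix_inv ?L ** (?L ** ?G)" using 1 by simp
  also have "\<dots> = ?G" using \<open>?L ** matrix_inv ?L = mat 1 \<and> matrix_inv ?L ** ?L = mat 1\<close>
    by (simp add: matrix_mul_assoc)
  finally show ?thesis .
qed



lemma prod_int:
  fixes U V :: "'w \<Rightarrow> real"
  assumes "U \<in> borel_measurable M" "V \<in> borel_measurable M"
    "integrable M (\<lambda>\<omega>. (U \<omega>)\<^sup>2)" "integrable M (\<lambda>\<omega>. (V \<omega>)\<^sup>2)"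
  shows "integrable M (\<lambda>\<omega>. U \<omega> * V \<omega>)"
proof (rule Bochner_Integration.integrable_bound)
  show "integrable M (\<lambda>\<omega>. (U \<omega>)\<^sup>2 + (V \<omega>)\<^sup>2)" using assms by simp
  show "(\<lambda>\<omega>. U \<omega> * V \<omega>) \<in> borel_measurable M" using assms by simp
  show "AE \<omega> in M. norm (U \<omega> * V \<omega>) \<le> norm ((U \<omega>)\<^sup>2 + (V \<omega>)\<^sup>2)"
  proof (rule AE_I2)
    fix \<omega>
    have "2 * \<bar>U \<omega>\<bar> * \<bar>V \<omega>\<bar> \<le> (U \<omega>)\<^sup>2 + (V \<omega>)\<^sup>2"
      using sum_squares_bound[of "\<bar>U \<omega>\<bar>" "\<bar>V \<omega>\<bar>"] by simp
    moreover have "0 \<le> \<bar>U \<omega>\<bar> * \<bar>V \<omega>\<bar>" by simp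
    moreover have "norm (U \<omega> * V \<omega>) = \<bar>U \<omega>\<bar> * \<bar>V \<omega>\<bar>" by (simp add: abs_mult)
    moreover have "norm ((U \<omega>)\<^sup>2 + (V \<omega>)\<^sup>2) = (U \<omega>)\<^sup>2 + (V \<omega>)\<^sup>2" by simp
    ultimately show "norm (U \<omega> * V \<omega>) \<le> norm ((U \<omega>)\<^sup>2 + (V \<omega>)\<^sup>2)"
      by linarith
  qed
qed

lemma sq_sum_integral:
  fixes Y :: "'i \<Rightarrow> 'w \<Rightarrow> real"
  assumes "finite I" "\<And>i. i \<in> I \<Longrightarrow> Y i \<in> borel_measurable M"
    "\<And>i. i \<in> I \<Longrightarrow> integrable M (\<lambda>\<omega>. (Y i \<omega>)\<^sup>2)"
  shows "integral\<^sup>L M (\<lambda>\<omega>. (\<Sum>i\<in>I. Y i \<omega>)\<^sup>2) = (\<Sum>i\<in>I. \<Sum>j\<in>I. integral\<^sup>L M (\<lambda>\<omega>. Y i \<omega> * Y j \<omega>))"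
proof -
  have "(\<lambda>\<omega>. (\<Sum>i\<in>I. Y i \<omega>)\<^sup>2) = (\<lambda>\<omega>. \<Sum>i\<in>I. \<Sum>j\<in>I. Y i \<omega> * Y j \<omega>)"
    by (simp add: power2_eq_square sum_product)
  moreover have "integrable M (\<lambda>\<omega>. Y i \<omega> * Y j \<omega>)" if "i \<in> I" "j \<in> I" for i j
    using prod_int assms that by blast
  ultimately show ?thesis
    by (simp add: integral_sum)
qed



lemma depth_le: "node_depth par a \<le> tree_depth par"
  unfolding tree_depth_def by (rule Max_ge) auto

lemma G_bounds:
  fixes par :: "'n::finite \<Rightarrow> 'n option"
  assumes tree: "is_rooted_tree par" and pos: "\<And>n. r n > 0"
  shows "0 \<le> Gmat par (\<lambda>n. 1 / r n) $ a $ c"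
    and "Gmat par (\<lambda>n. 1 / r n) $ a $ c \<le> real (tree_depth par) * Max (range r)"
proof -
  have e: "Gmat par (\<lambda>n. 1 / r n) $ a $ c = (\<Sum>n\<in>UNIV. Bmat par $ a $ n * Bmat par $ c $ n * r n)"
    by (simp add: Gmat_def)
  show "0 \<le> Gmat par (\<lambda>n. 1 / r n) $ a $ c"
    unfolding e using pos by (auto intro!: sum_nonneg simp: Bmat_def less_imp_le)
  have "(\<Sum>n\<in>UNIV. Bmat par $ a $ n * Bmat par $ c $ n * r n) \<le> (\<Sum>n\<in>UNIV. if n \<in> tpath par a then Max (range r) else 0)"
  proof (rule sum_mono)
    fix n
    have "r n \<le> Max (range r)" by (rule Max_ge) auto
    then show "Bmat par $ a $ n * Bmat par $ c $ n * r n \<le> (if n \<in> tpath par a then Max (range r) else 0)"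
      using pos[of n] by (auto simp: Bmat_def intro: order.trans[OF less_imp_le])
  qed
  also have "\<dots> = real (card (tpath par a)) * Max (range r)"
    by (simp add: sum.If_cases)
  also have "\<dots> \<le> real (tree_depth par) * Max (range r)"
  proof (rule mult_right_mono)
    show "real (card (tpath par a)) \<le> real (tree_depth par)"
      using card_tpath[OF tree, of a] depth_le[of par a] by simp
    have "r undefined \<le> Max (range r)" by (rule Max_ge) auto
    then show "0 \<le> Max (range r)" using pos[of undefined] by linarith
  qed
  finally show "Gmat par (\<lambda>n. 1 / r n) $ a $ c \<le> real (tree_depth par) * Max (range r)"
    using e by simp
qed



lemma cov_sym: "cov M X Y = cov M Y X"
  by (simp add: cov_def mult.commute)

lemma lin_sq_int:
  fixes U V :: "'w \<Rightarrow> real"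
  assumes "U \<in> borel_measurable M" "V \<in> borel_measurable M"
    "integrable M (\<lambda>\<omega>. (U \<omega>)\<^sup>2)" "integrable M (\<lambda>\<omega>. (V \<omega>)\<^sup>2)"
  shows "integrable M (\<lambda>\<omega>. (a * U \<omega> + b * V \<omega>)\<^sup>2)"
proof -
  have "(\<lambda>\<omega>. (a * U \<omega> + b * V \<omega>)\<^sup>2) = (\<lambda>\<omega>. a\<^sup>2 * (U \<omega>)\<^sup>2 + (2 * a * b) * (U \<omega> * V \<omega>) + b\<^sup>2 * (V \<omega>)\<^sup>2)"
    by (simp add: power2_eq_square algebra_simps)
  moreover have "integrable M (\<lambda>\<omega>. U \<omega> * V \<omega>)" using prod_int assms by blast
  ultimately show ?thesis using assms by simp
qed

theorem theorem11:
  fixes par :: "'n::finite \<Rightarrow> 'n option"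
    and r x :: "'n \<Rightarrow> real"
    and M :: "'w measure"
    and p q :: "'n \<Rightarrow> 'w \<Rightarrow> real"
  assumes tree: "is_rooted_tree par"
    and root_deg: "root_degree_one par"
    and r_pos: "\<And>n. r n > 0"
    and x_pos: "\<And>n. x n > 0"
    and prob: "prob_space M"
    and gauss: "jointly_centered_gaussian M p q"
    and p_sq: "\<And>c. integrable M (\<lambda>\<omega>. (p c \<omega>)\<^sup>2)"
    and q_sq: "\<And>c. integrable M (\<lambda>\<omega>. (q c \<omega>)\<^sup>2)"
    and cov_p: "\<And>a b. a \<noteq> b \<Longrightarrow> cov M (p a) (p b) = 0"
    and cov_q: "\<And>a b. a \<noteq> b \<Longrightarrow> cov M (q a) (q b) = 0"
    and cov_qp: "\<And>a b. a \<noteq> b \<Longrightarrow> cov M (q a) (p b) = 0"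
    and cov_qp_diag: "\<And>a. cov M (q a) (p a) \<ge> 0"
  shows "\<forall>a. cov M (lcpf_v par r x p q a) (lcpf_v par r x p q a)
            \<le> (real (tree_depth par))\<^sup>2 * real (CARD('n option)) *
               (max ((Max (range r))\<^sup>2) ((Max (range x))\<^sup>2) *
                Max (range (\<lambda>c. cov M (p c) (p c) + cov M (q c) (q c) + 2 * cov M (p c) (q c))))"
proof
  fix a
  interpret prob_space M by (rule prob)
  define Rm where "Rm = Gmat par (\<lambda>n. 1 / r n)"
  define Xm where "Xm = Gmat par (\<lambda>n. 1 / x n)"
  define R where "R c = Rm $ a $ c" for c
  define X where "X c = Xm $ a $ c" for c
  have Rinv: "matrix_inv (red_laplacian par (\<lambda>n. 1 / r n)) = Rm"
    unfolding Rm_def by (rule inv_G[OF tree]) (use r_pos in \<open>simp add: less_imp_neq[symmetric]\<close>)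
  have Xinv: "matrix_inv (red_laplacian par (\<lambda>n. 1 / x n)) = Xm"
    unfolding Xm_def by (rule inv_G[OF tree]) (use x_pos in \<open>simp add: less_imp_neq[symmetric]\<close>)
  have v: "lcpf_v par r x p q a = (\<lambda>\<omega>. \<Sum>c\<in>UNIV. R c * p c \<omega> + X c * q c \<omega>)"
    by (simp add: fun_eq_iff lcpf_v_def Rinv Xinv matrix_vector_mult_def sum.distrib R_def X_def)
  have pm: "p c \<in> borel_measurable M" for c
  proof -
    have "centered_gaussian M (\<lambda>\<omega>. \<Sum>c'\<in>UNIV. (if c' = c then 1 else 0) * p c' \<omega> + 0 * q c' \<omega>)"
      using gauss[unfolded jointly_centered_gaussian_def, rule_format, of "\<lambda>c'. if c' = c then 1 else 0" "\<lambda>_. 0"] by simp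
    moreover have "(\<lambda>\<omega>. \<Sum>c'\<in>UNIV. (if c' = c then 1 else 0) * p c' \<omega> + 0 * q c' \<omega>) = p c"
      using delta1[of c] by (simp add: fun_eq_iff)
    ultimately show ?thesis by (simp add: centered_gaussian_def)
  qed
  have qm: "q c \<in> borel_measurable M" for c
  proof -
    have "centered_gaussian M (\<lambda>\<omega>. \<Sum>c'\<in>UNIV. 0 * p c' \<omega> + (if c' = c then 1 else 0) * q c' \<omega>)"
      using gauss[unfolded jointly_centered_gaussian_def, rule_format, of "\<lambda>_. 0" "\<lambda>c'. if c' = c then 1 else 0"] by simp
    moreover have "(\<lambda>\<omega>. \<Sum>c'\<in>UNIV. 0 * p c' \<omega> + (if c' = c then 1 else 0) * q c' \<omega>) = q c"
      using delta1[of c] by (simp add: fun_eq_iff)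
    ultimately show ?thesis by (simp add: centered_gaussian_def)
  qed
  have pint: "integrable M (p c)" for c
    by (rule square_integrable_imp_integrable[OF pm p_sq])
  have qint: "integrable M (q c)" for c
    by (rule square_integrable_imp_integrable[OF qm q_sq])
  define P where "P c \<omega> = p c \<omega> - expectation (p c)" for c \<omega>
  define Q where "Q c \<omega> = q c \<omega> - expectation (q c)" for c \<omega>
  have Pm: "P c \<in> borel_measurable M" for c unfolding P_def[abs_def] using pm by simp
  have Qm: "Q c \<in> borel_measurable M" for c unfolding Q_def[abs_def] using qm by simp
  have P2: "integrable M (\<lambda>\<omega>. (P c \<omega>)\<^sup>2)" for c
  proof -
    have "(\<lambda>\<omega>. (P c \<omega>)\<^sup>2) = (\<lambda>\<omega>. (p c \<omega>)\<^sup>2 + (expectation (p c))\<^sup>2 - (2 * expectation (p c)) * p c \<omega>)"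
      by (simp add: P_def power2_diff algebra_simps)
    then show ?thesis using p_sq pint by simp
  qed
  have Q2: "integrable M (\<lambda>\<omega>. (Q c \<omega>)\<^sup>2)" for c
  proof -
    have "(\<lambda>\<omega>. (Q c \<omega>)\<^sup>2) = (\<lambda>\<omega>. (q c \<omega>)\<^sup>2 + (expectation (q c))\<^sup>2 - (2 * expectation (q c)) * q c \<omega>)"
      by (simp add: Q_def power2_diff algebra_simps)
    then show ?thesis using q_sq qint by simp
  qed
  have covPP: "cov M (p c) (p c') = expectation (\<lambda>\<omega>. P c \<omega> * P c' \<omega>)" for c c'
    by (simp add: cov_def P_def)
  have covPQ: "cov M (p c) (q c') = expectation (\<lambda>\<omega>. P c \<omega> * Q c' \<omega>)" for c c'
    by (simp add: cov_def P_def Q_def)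
  have covQP: "cov M (q c) (p c') = expectation (\<lambda>\<omega>. Q c \<omega> * P c' \<omega>)" for c c'
    by (simp add: cov_def P_def Q_def)
  have covQQ: "cov M (q c) (q c') = expectation (\<lambda>\<omega>. Q c \<omega> * Q c' \<omega>)" for c c'
    by (simp add: cov_def Q_def)
  define Y where "Y c \<omega> = R c * P c \<omega> + X c * Q c \<omega>" for c \<omega>
  have Ym: "Y c \<in> borel_measurable M" for c unfolding Y_def[abs_def] using Pm Qm by simp
  have Y2: "integrable M (\<lambda>\<omega>. (Y c \<omega>)\<^sup>2)" for c
    unfolding Y_def by (rule lin_sq_int[OF Pm Qm P2 Q2])
  have Ev: "expectation (lcpf_v par r x p q a) = (\<Sum>c\<in>UNIV. R c * expectation (p c) + X c * expectation (q c))"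
    unfolding v using pint qint by (simp add: integral_sum)
  have cent: "lcpf_v par r x p q a \<omega> - expectation (lcpf_v par r x p q a) = (\<Sum>c\<in>UNIV. Y c \<omega>)" for \<omega>
    unfolding Ev by (simp add: v Y_def P_def Q_def sum_subtractf[symmetric] algebra_simps)
  have "cov M (lcpf_v par r x p q a) (lcpf_v par r x p q a) = expectation (\<lambda>\<omega>. (\<Sum>c\<in>UNIV. Y c \<omega>)\<^sup>2)"
    unfolding cov_def cent by (simp add: power2_eq_square)
  also have "\<dots> = (\<Sum>c\<in>UNIV. \<Sum>c'\<in>UNIV. expectation (\<lambda>\<omega>. Y c \<omega> * Y c' \<omega>))"
    by (rule sq_sum_integral) (simp_all add: Ym Y2)
  also have "\<dots> = (\<Sum>c\<in>UNIV. \<Sum>c'\<in>UNIV. R c * R c' * cov M (p c) (p c') + R c * X c' * cov M (p c) (q c')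
       + X c * R c' * cov M (q c) (p c') + X c * X c' * cov M (q c) (q c'))"
  proof (intro sum.cong refl)
    fix c c'
    have i1: "integrable M (\<lambda>\<omega>. P c \<omega> * P c' \<omega>)" by (rule prod_int[OF Pm Pm P2 P2])
    have i2: "integrable M (\<lambda>\<omega>. P c \<omega> * Q c' \<omega>)" by (rule prod_int[OF Pm Qm P2 Q2])
    have i3: "integrable M (\<lambda>\<omega>. Q c \<omega> * P c' \<omega>)" by (rule prod_int[OF Qm Pm Q2 P2])
    have i4: "integrable M (\<lambda>\<omega>. Q c \<omega> * Q c' \<omega>)" by (rule prod_int[OF Qm Qm Q2 Q2])
    have "(\<lambda>\<omega>. Y c \<omega> * Y c' \<omega>) = (\<lambda>\<omega>. (R c * R c') * (P c \<omega> * P c' \<omega>) + (R c * X c') * (P c \<omega> * Q c' \<omega>)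
       + (X c * R c') * (Q c \<omega> * P c' \<omega>) + (X c * X c') * (Q c \<omega> * Q c' \<omega>))"
      by (simp add: fun_eq_iff Y_def algebra_simps)
    then show "expectation (\<lambda>\<omega>. Y c \<omega> * Y c' \<omega>) = R c * R c' * cov M (p c) (p c') + R c * X c' * cov M (p c) (q c')
       + X c * R c' * cov M (q c) (p c') + X c * X c' * cov M (q c) (q c')"
      using i1 i2 i3 i4 by (simp add: covPP covPQ covQP covQQ)
  qed
  also have "\<dots> = (\<Sum>c\<in>UNIV. (R c)\<^sup>2 * cov M (p c) (p c) + (X c)\<^sup>2 * cov M (q c) (q c) + 2 * (R c * X c) * cov M (p c) (q c))"
  proof (intro sum.cong refl)
    fix c
    have "(\<Sum>c'\<in>UNIV. R c * R c' * cov M (p c) (p c') + R c * X c' * cov M (p c) (q c')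
       + X c * R c' * cov M (q c) (p c') + X c * X c' * cov M (q c) (q c'))
      = (\<Sum>c'\<in>UNIV. if c' = c then (R c)\<^sup>2 * cov M (p c) (p c) + (X c)\<^sup>2 * cov M (q c) (q c) + 2 * (R c * X c) * cov M (p c) (q c) else 0)"
    proof (intro sum.cong refl)
      fix c'
      show "R c * R c' * cov M (p c) (p c') + R c * X c' * cov M (p c) (q c')
       + X c * R c' * cov M (q c) (p c') + X c * X c' * cov M (q c) (q c')
       = (if c' = c then (R c)\<^sup>2 * cov M (p c) (p c) + (X c)\<^sup>2 * cov M (q c) (q c) + 2 * (R c * X c) * cov M (p c) (q c) else 0)"
      proof (cases "c' = c")
        case True
        then show ?thesis using cov_sym[of M "q c" "p c"] by (simp add: power2_eq_square algebra_simps)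
      next
        case False
        then show ?thesis using cov_p[of c c'] cov_q[of c c'] cov_qp[of c c'] cov_qp[of c' c] cov_sym[of M "p c" "q c'"]
          by simp
      qed
    qed
    then show "(\<Sum>c'\<in>UNIV. R c * R c' * cov M (p c) (p c') + R c * X c' * cov M (p c) (q c')
       + X c * R c' * cov M (q c) (p c') + X c * X c' * cov M (q c) (q c'))
      = (R c)\<^sup>2 * cov M (p c) (p c) + (X c)\<^sup>2 * cov M (q c) (q c) + 2 * (R c * X c) * cov M (p c) (q c)"
      by simp
  qed
  also have "\<dots> \<le> (\<Sum>c\<in>(UNIV::'n set). (real (tree_depth par))\<^sup>2 * (max ((Max (range r))\<^sup>2) ((Max (range x))\<^sup>2) *
                Max (range (\<lambda>c. cov M (p c) (p c) + cov M (q c) (q c) + 2 * cov M (p c) (q c)))))"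
  proof (rule sum_mono)
    fix c
    let ?d = "real (tree_depth par)" and ?rM = "Max (range r)" and ?xM = "Max (range x)"
    let ?m = "max (?rM\<^sup>2) (?xM\<^sup>2)"
    let ?K = "Max (range (\<lambda>c. cov M (p c) (p c) + cov M (q c) (q c) + 2 * cov M (p c) (q c)))"
    have R0: "0 \<le> R c" and R1: "R c \<le> ?d * ?rM"
      unfolding R_def Rm_def using G_bounds[OF tree r_pos] by auto
    have X0: "0 \<le> X c" and X1: "X c \<le> ?d * ?xM"
      unfolding X_def Xm_def using G_bounds[OF tree x_pos] by auto
    have "r c \<le> ?rM" by (rule Max_ge) auto
    then have rM0: "0 \<le> ?rM" using r_pos[of c] by linarith
    have "x c \<le> ?xM" by (rule Max_ge) auto
    then have xM0: "0 \<le> ?xM" using x_pos[of c] by linarith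
    have d0: "0 \<le> ?d" by simp
    have m0': "0 \<le> ?d\<^sup>2 * ?m"
      by (intro mult_nonneg_nonneg zero_le_power2 order.trans[OF zero_le_power2 max.cobounded1])
    have "(R c)\<^sup>2 \<le> (?d * ?rM)\<^sup>2" using R1 R0 by (rule power_mono)
    also have "\<dots> = ?d\<^sup>2 * ?rM\<^sup>2" by (simp add: power_mult_distrib)
    also have "\<dots> \<le> ?d\<^sup>2 * ?m" by (intro mult_left_mono max.cobounded1 zero_le_power2)
    finally have R2: "(R c)\<^sup>2 \<le> ?d\<^sup>2 * ?m" .
    have "(X c)\<^sup>2 \<le> (?d * ?xM)\<^sup>2" using X1 X0 by (rule power_mono)
    also have "\<dots> = ?d\<^sup>2 * ?xM\<^sup>2" by (simp add: power_mult_distrib)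
    also have "\<dots> \<le> ?d\<^sup>2 * ?m" by (intro mult_left_mono max.cobounded2 zero_le_power2)
    finally have X2: "(X c)\<^sup>2 \<le> ?d\<^sup>2 * ?m" .
    have "R c * X c \<le> (?d * ?rM) * (?d * ?xM)" using R0 R1 X0 X1 by (intro mult_mono) auto
    also have "\<dots> = ?d\<^sup>2 * (?rM * ?xM)" by (simp add: power2_eq_square)
    also have "\<dots> \<le> ?d\<^sup>2 * ?m"
    proof (rule mult_left_mono)
      show "?rM * ?xM \<le> ?m"
      proof (cases "?rM \<le> ?xM")
        case True
        then have "?rM * ?xM \<le> ?xM * ?xM" using xM0 by (intro mult_right_mono)
        then show ?thesis by (simp add: power2_eq_square)
      next
        case False
        have "?rM * ?xM \<le> ?rM * ?rM" by (rule mult_left_mono) (use False rM0 in linarith)+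
        then show ?thesis by (simp add: power2_eq_square)
      qed
    qed simp
    finally have RX: "R c * X c \<le> ?d\<^sup>2 * ?m" .
    have Vp: "0 \<le> cov M (p c) (p c)" unfolding covPP by (rule integral_nonneg_AE) simp
    have Vq: "0 \<le> cov M (q c) (q c)" unfolding covQQ by (rule integral_nonneg_AE) simp
    have C0: "0 \<le> cov M (p c) (q c)" using cov_qp_diag[of c] cov_sym[of M "p c" "q c"] by simp
    have "(R c)\<^sup>2 * cov M (p c) (p c) + (X c)\<^sup>2 * cov M (q c) (q c) + 2 * (R c * X c) * cov M (p c) (q c)
       \<le> (?d\<^sup>2 * ?m) * cov M (p c) (p c) + (?d\<^sup>2 * ?m) * cov M (q c) (q c) + 2 * (?d\<^sup>2 * ?m) * cov M (p c) (q c)"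
      using mult_right_mono[OF R2 Vp] mult_right_mono[OF X2 Vq] mult_right_mono[OF RX C0] by linarith
    also have "\<dots> = (?d\<^sup>2 * ?m) * (cov M (p c) (p c) + cov M (q c) (q c) + 2 * cov M (p c) (q c))"
      by (simp add: algebra_simps)
    also have "\<dots> \<le> (?d\<^sup>2 * ?m) * ?K"
    proof (rule mult_left_mono)
      show "cov M (p c) (p c) + cov M (q c) (q c) + 2 * cov M (p c) (q c) \<le> ?K" by (rule Max_ge) auto
    qed (rule m0')
    finally show "(R c)\<^sup>2 * cov M (p c) (p c) + (X c)\<^sup>2 * cov M (q c) (q c) + 2 * (R c * X c) * cov M (p c) (q c)
       \<le> ?d\<^sup>2 * (?m * ?K)" by (simp add: mult_ac)
  qed
  also have "\<dots> \<le> (real (tree_depth par))\<^sup>2 * real (CARD('n option)) *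
               (max ((Max (range r))\<^sup>2) ((Max (range x))\<^sup>2) *
                Max (range (\<lambda>c. cov M (p c) (p c) + cov M (q c) (q c) + 2 * cov M (p c) (q c))))"
  proof -
    let ?K = "Max (range (\<lambda>c. cov M (p c) (p c) + cov M (q c) (q c) + 2 * cov M (p c) (q c)))"
    have K0: "0 \<le> ?K"
    proof -
      have "cov M (p undefined) (p undefined) + cov M (q undefined) (q undefined) + 2 * cov M (p undefined) (q undefined) \<le> ?K"
        by (rule Max_ge) auto
      moreover have "0 \<le> cov M (p undefined) (p undefined)" unfolding covPP by (rule integral_nonneg_AE) simp
      moreover have "0 \<le> cov M (q undefined) (q undefined)" unfolding covQQ by (rule integral_nonneg_AE) simp
      moreover have "0 \<le> cov M (p undefined) (q undefined)" using cov_qp_diag[of undefined] cov_sym[of M "p undefined"] by simp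
      ultimately show ?thesis by linarith
    qed
    have card: "CARD('n) \<le> CARD('n option)"
    proof -
      have "CARD('n) = card (Some ` (UNIV::'n set))" by (simp add: card_image)
      also have "\<dots> \<le> CARD('n option)" by (rule card_mono) auto
      finally show ?thesis .
    qed
    have m0: "0 \<le> max ((Max (range r))\<^sup>2) ((Max (range x))\<^sup>2)"
      by (rule order.trans[OF zero_le_power2 max.cobounded1])
    have "real CARD('n) * ((real (tree_depth par))\<^sup>2 * (max ((Max (range r))\<^sup>2) ((Max (range x))\<^sup>2) * ?K))
        \<le> real CARD('n option) * ((real (tree_depth par))\<^sup>2 * (max ((Max (range r))\<^sup>2) ((Max (range x))\<^sup>2) * ?K))"
      using card K0 m0 by (intro mult_right_mono) auto
    then show ?thesis by (simp add: mult_ac)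
  qed
  finally show "cov M (lcpf_v par r x p q a) (lcpf_v par r x p q a)
            \<le> (real (tree_depth par))\<^sup>2 * real (CARD('n option)) *
               (max ((Max (range r))\<^sup>2) ((Max (range x))\<^sup>2) *
                Max (range (\<lambda>c. cov M (p c) (p c) + cov M (q c) (q c) + 2 * cov M (p c) (q c))))" .
qed

end
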